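(* Let $u\in C^2[0,\pi]$ with $u(x)>0$ for all $x\in[0,\pi]$, let $p,q\in\mathbb{N}^+$ with $\gcd(p,q)=1$, and let $\mu_{mn}=\lambda_n^2-\left(\frac{q}{p}m\right)^2$ for $m\in\mathbb{N}=\{0,1,2,\dots\}$, $n\in\mathbb{N}^+$, where $\lambda_1^2<\lambda_2^2<\cdots$ are the eigenvalues of the Dirichlet Sturm–Liouville problem $(u(x)\varphi'(x))'=-\lambda^2u(x)\varphi(x)$, $\varphi(0)=\varphi(\pi)=0$. Assume $p$ is even. Then, for odd $m$, the eigenvalues $\mu_{mn}$ are isolated and have finite multiplicity; that is, every element of the set $\{\mu_{mn}: m \text{ odd},\ n\in\mathbb{N}^+\}$ is an isolated point of this set and is equal to $\mu_{mn}$ for only finitely many pairs $(m,n)$ with $m$ odd, $n\in\mathbb{N}^+$.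
   Context: The $\mu_{mn}$ are the eigenvalues of the linear wave operator $L$ associated with $u(x)y_{tt}-(u(x)y_x)_x$ on $T$-periodic (with $T=2\pi p/q$) functions satisfying Dirichlet conditions at $x=0,\pi$, with eigenfunctions $\varphi_n(x)\cos\frac{q}{p}mt$, $\varphi_n(x)\sin\frac{q}{p}mt$, where $\varphi_n$ is the eigenfunction corresponding to $\lambda_n^2$. *)

theory Defs
  imports "HOL-Analysis.Analysis"
begin

definition C2_on_0pi :: "(real \<Rightarrow> real) \<Rightarrow> bool" where
  "C2_on_0pi u \<longleftrightarrow> (\<exists>u' u''.
     (\<forall>x\<in>{0..pi}. (u has_real_derivative u' x) (at x within {0..pi})) \<and>
     (\<forall>x\<in>{0..pi}. (u' has_real_derivative u'' x) (at x within {0..pi})) \<and>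
     continuous_on {0..pi} u'')"

definition dirichlet_SL_eigenvalue :: "(real \<Rightarrow> real) \<Rightarrow> real \<Rightarrow> bool" where
  "dirichlet_SL_eigenvalue u ev \<longleftrightarrow> (\<exists>\<phi> \<phi>'.
     (\<forall>x\<in>{0..pi}. (\<phi> has_real_derivative \<phi>' x) (at x within {0..pi})) \<and>
     (\<forall>x\<in>{0..pi}. ((\<lambda>y. u y * \<phi>' y) has_real_derivative (- ev * u x * \<phi> x))
                      (at x within {0..pi})) \<and>
     \<phi> 0 = 0 \<and> \<phi> pi = 0 \<and> (\<exists>x\<in>{0..pi}. \<phi> x \<noteq> 0))"

end

theory Submission
  imports Defs
begin

lemma decr_Icc:
  fixes f f' :: "real \<Rightarrow> real"
  assumes ab: "a \<le> b"
    and d: "\<And>x. x \<in> {a..b} \<Longrightarrow> (f has_real_derivative f' x) (at x within {a..b})"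
    and n: "\<And>x. x \<in> {a..b} \<Longrightarrow> f' x \<le> 0"
  shows "f b \<le> f a"
proof (rule DERIV_nonpos_imp_decreasing_open[OF ab])
  fix x assume "a < x" "x < b"
  then have "(f has_real_derivative f' x) (at x)"
    using d[of x] by (simp add: at_within_Icc_at)
  then show "\<exists>y. DERIV f x :> y \<and> y \<le> 0" using n[of x] \<open>a < x\<close> \<open>x < b\<close> by auto
next
  show "continuous_on {a..b} f" by (rule DERIV_continuous_on[OF d])
qed

lemma decr_sub:
  fixes f f' :: "real \<Rightarrow> real"
  assumes ab: "a \<le> b" "{a..b} \<subseteq> S"
    and d: "\<And>x. x \<in> S \<Longrightarrow> (f has_real_derivative f' x) (at x within S)"
    and n: "\<And>x. x \<in> {a..b} \<Longrightarrow> f' x \<le> 0"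
  shows "f b \<le> f a"
  using ab(1) apply (rule decr_Icc)
  using d ab(2) has_field_derivative_subset apply blast
  using n by blast

locale SL =
  fixes u u' u'' :: "real \<Rightarrow> real"
  assumes du: "\<And>x. x \<in> {0..pi} \<Longrightarrow> (u has_real_derivative u' x) (at x within {0..pi})"
    and du': "\<And>x. x \<in> {0..pi} \<Longrightarrow> (u' has_real_derivative u'' x) (at x within {0..pi})"
    and cu'': "continuous_on {0..pi} u''"
    and upos: "\<And>x. x \<in> {0..pi} \<Longrightarrow> u x > 0"
begin

lemma bounds: "\<exists>m M D1 D2. m > 0 \<and> (\<forall>x\<in>{0..pi}. m \<le> u x \<and> u x \<le> M \<and> \<bar>u' x\<bar> \<le> D1 \<and> \<bar>u'' x\<bar> \<le> D2)"
proof -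
  have cu: "continuous_on {0..pi} u" by (rule DERIV_continuous_on[OF du])
  have cu': "continuous_on {0..pi} u'" by (rule DERIV_continuous_on[OF du'])
  obtain a where a: "a \<in> {0..pi}" "\<forall>y\<in>{0..pi}. u a \<le> u y"
    using continuous_attains_inf[OF compact_Icc _ cu] by fastforce
  obtain M where M: "\<forall>y\<in>{0..pi}. u y \<le> M"
    using continuous_attains_sup[OF compact_Icc _ cu] by fastforce
  obtain D1 where D1: "\<forall>y\<in>{0..pi}. \<bar>u' y\<bar> \<le> D1"
    using compact_imp_bounded[OF compact_continuous_image[OF cu' compact_Icc]]
    unfolding bounded_iff by fastforce
  obtain D2 where D2: "\<forall>y\<in>{0..pi}. \<bar>u'' y\<bar> \<le> D2"
    using compact_imp_bounded[OF compact_continuous_image[OF cu'' compact_Icc]]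
    unfolding bounded_iff by fastforce
  show ?thesis using a upos[OF a(1)] M D1 D2 by (intro exI[of _ "u a"] exI[of _ M] exI[of _ D1] exI[of _ D2]) auto
qed

definition sol :: "real \<Rightarrow> (real \<Rightarrow> real) \<Rightarrow> (real \<Rightarrow> real) \<Rightarrow> bool" where
  "sol ev \<phi> \<psi> \<longleftrightarrow> (\<forall>x\<in>{0..pi}. (\<phi> has_real_derivative \<psi> x / u x) (at x within {0..pi})) \<and>
     (\<forall>x\<in>{0..pi}. (\<psi> has_real_derivative (- ev * u x * \<phi> x)) (at x within {0..pi}))"

lemma sol_zero:
  assumes s: "sol ev \<phi> \<psi>" and z: "\<phi> 0 = 0" "\<psi> 0 = 0" and x: "x \<in> {0..pi}"
  shows "\<phi> x = 0 \<and> \<psi> x = 0"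
proof -
  obtain m M D1 D2 where b: "m > 0" "\<forall>x\<in>{0..pi}. m \<le> u x \<and> u x \<le> M \<and> \<bar>u' x\<bar> \<le> D1 \<and> \<bar>u'' x\<bar> \<le> D2"
    using bounds by blast
  define A where "A = 1/m + \<bar>ev\<bar> * M"
  define G where "G = (\<lambda>y. (\<phi> y ^ 2 + \<psi> y ^ 2) * exp (- A * y))"
  define G' where "G' = (\<lambda>y. (2 * \<phi> y * (\<psi> y / u y) + 2 * \<psi> y * (- ev * u y * \<phi> y)) * exp (- A * y)
     + (\<phi> y ^ 2 + \<psi> y ^ 2) * (exp (- A * y) * (- A)))"
  have "G x \<le> G 0"
  proof (rule decr_sub[where S="{0..pi}" and f'=G' and f=G and a=0 and b=x])
    show "0 \<le> x" "{0..x} \<subseteq> {0..pi}" using x by auto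
  next
    fix y assume y: "y \<in> {0..pi}"
    have d1: "(\<phi> has_real_derivative \<psi> y / u y) (at y within {0..pi})" using s y unfolding sol_def by blast
    have d2: "(\<psi> has_real_derivative (- ev * u y * \<phi> y)) (at y within {0..pi})" using s y unfolding sol_def by blast
    show "(G has_real_derivative G' y) (at y within {0..pi})"
      unfolding G_def G'_def
      by (rule derivative_eq_intros d1 d2 refl | simp)+
  next
    fix y assume y: "y \<in> {0..x}"
    then have y': "y \<in> {0..pi}" using x by auto
    have um: "m \<le> u y" "u y \<le> M" using b y' by auto
    have upy: "u y > 0" using upos[OF y'] .
    have h1: "2 * \<phi> y * (\<psi> y / u y) \<le> (\<phi> y ^ 2 + \<psi> y ^ 2) / m"
    proof -
      have "2 * \<phi> y * \<psi> y \<le> \<phi> y ^ 2 + \<psi> y ^ 2" using sum_squares_bound[of "\<phi> y" "\<psi> y"] by (simp add: mult.assoc)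
      have "\<bar>2 * \<phi> y * \<psi> y\<bar> \<le> \<phi> y ^ 2 + \<psi> y ^ 2"
        using sum_squares_bound[of "\<phi> y" "\<psi> y"] sum_squares_bound[of "\<phi> y" "- \<psi> y"] by (auto simp: abs_if)
      then have "\<bar>2 * \<phi> y * (\<psi> y / u y)\<bar> \<le> (\<phi> y ^ 2 + \<psi> y ^ 2) / u y"
        using upy by (simp add: abs_mult divide_right_mono)
      also have "\<dots> \<le> (\<phi> y ^ 2 + \<psi> y ^ 2) / m"
        using um b(1) by (intro divide_left_mono) auto
      finally show ?thesis by linarith
    qed
    have h2: "2 * \<psi> y * (- ev * u y * \<phi> y) \<le> \<bar>ev\<bar> * M * (\<phi> y ^ 2 + \<psi> y ^ 2)"
    proof -
      have "\<bar>2 * \<phi> y * \<psi> y\<bar> \<le> \<phi> y ^ 2 + \<psi> y ^ 2"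
        using sum_squares_bound[of "\<phi> y" "\<psi> y"] sum_squares_bound[of "\<phi> y" "- \<psi> y"] by (auto simp: abs_if)
      have "2 * \<psi> y * (- ev * u y * \<phi> y) \<le> \<bar>2 * \<psi> y * (- ev * u y * \<phi> y)\<bar>" by simp
      also have "\<dots> = \<bar>ev\<bar> * u y * \<bar>2 * \<phi> y * \<psi> y\<bar>" using upy by (simp add: abs_mult)
      also have "\<dots> \<le> \<bar>ev\<bar> * M * (\<phi> y ^ 2 + \<psi> y ^ 2)"
        using \<open>\<bar>2 * \<phi> y * \<psi> y\<bar> \<le> _\<close> um upy by (intro mult_mono) auto
      finally show ?thesis .
    qed
    have "2 * \<phi> y * (\<psi> y / u y) + 2 * \<psi> y * (- ev * u y * \<phi> y) \<le> A * (\<phi> y ^ 2 + \<psi> y ^ 2)"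
    proof -
      have "A * (\<phi> y ^ 2 + \<psi> y ^ 2) = (\<phi> y ^ 2 + \<psi> y ^ 2) / m + \<bar>ev\<bar> * M * (\<phi> y ^ 2 + \<psi> y ^ 2)"
        unfolding A_def using b(1) by (simp add: field_simps)
      then show ?thesis using h1 h2 by linarith
    qed
    moreover have "G' y = (2 * \<phi> y * (\<psi> y / u y) + 2 * \<psi> y * (- ev * u y * \<phi> y) - A * (\<phi> y ^ 2 + \<psi> y ^ 2)) * exp (- A * y)"
      unfolding G'_def by (simp add: algebra_simps)
    ultimately show "G' y \<le> 0"
      by (simp add: mult_nonpos_nonneg)
  qed
  then have "(\<phi> x ^ 2 + \<psi> x ^ 2) * exp (- A * x) \<le> 0" unfolding G_def using z by simp
  then have "\<phi> x ^ 2 + \<psi> x ^ 2 \<le> 0" by (simp add: mult_le_0_iff)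
  then show ?thesis by (smt (verit) zero_le_power2 power_eq_0_iff)  
qed

lemma eig_norm:
  assumes "dirichlet_SL_eigenvalue u ev"
  shows "\<exists>\<phi> \<psi>. sol ev \<phi> \<psi> \<and> \<phi> 0 = 0 \<and> \<phi> pi = 0 \<and> \<psi> 0 = 1"
proof -
  obtain \<phi> \<phi>' where d1: "\<forall>x\<in>{0..pi}. (\<phi> has_real_derivative \<phi>' x) (at x within {0..pi})"
    and d2: "\<forall>x\<in>{0..pi}. ((\<lambda>y. u y * \<phi>' y) has_real_derivative (- ev * u x * \<phi> x)) (at x within {0..pi})"
    and z: "\<phi> 0 = 0" "\<phi> pi = 0" and nz: "\<exists>x\<in>{0..pi}. \<phi> x \<noteq> 0"
    using assms unfolding dirichlet_SL_eigenvalue_def by blast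
  define \<psi> where "\<psi> = (\<lambda>y. u y * \<phi>' y)"
  have s: "sol ev \<phi> \<psi>" unfolding sol_def
  proof (intro conjI ballI)
    fix x assume x: "x \<in> {0..pi}"
    have "\<psi> x / u x = \<phi>' x" using upos[OF x] unfolding \<psi>_def by simp
    then show "(\<phi> has_real_derivative \<psi> x / u x) (at x within {0..pi})" using d1 x by simp
    show "(\<psi> has_real_derivative (- ev * u x * \<phi> x)) (at x within {0..pi})" using d2 x unfolding \<psi>_def by blast
  qed
  have p0: "\<psi> 0 \<noteq> 0"
  proof
    assume "\<psi> 0 = 0"
    then have "\<forall>x\<in>{0..pi}. \<phi> x = 0" using sol_zero[OF s z(1)] by blast
    then show False using nz by blast
  qed
  define c where "c = 1 / \<psi> 0"
  have "sol ev (\<lambda>x. c * \<phi> x) (\<lambda>x. c * \<psi> x)" unfolding sol_def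
  proof (intro conjI ballI)
    fix x assume x: "x \<in> {0..pi}"
    have a: "(\<phi> has_real_derivative \<psi> x / u x) (at x within {0..pi})" using s x unfolding sol_def by blast
    have b: "(\<psi> has_real_derivative (- ev * u x * \<phi> x)) (at x within {0..pi})" using s x unfolding sol_def by blast
    show "((\<lambda>x. c * \<phi> x) has_real_derivative c * \<psi> x / u x) (at x within {0..pi})"
      using DERIV_cmult[OF a, of c] by simp
    show "((\<lambda>x. c * \<psi> x) has_real_derivative - ev * u x * (c * \<phi> x)) (at x within {0..pi})"
      using DERIV_cmult[OF b, of c] by (simp add: algebra_simps)
  qed
  moreover have "c * \<psi> 0 = 1" using p0 unfolding c_def by simp
  ultimately show ?thesis using z by (intro exI[of _ "\<lambda>x. c * \<phi> x"] exI[of _ "\<lambda>x. c * \<psi> x"]) simp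
qed

lemma eig_intro:
  assumes s: "sol ev \<phi> \<psi>" and z: "\<phi> 0 = 0" "\<phi> pi = 0" and one: "\<psi> 0 = 1"
  shows "dirichlet_SL_eigenvalue u ev"
proof -
  have h1: "\<forall>x\<in>{0..pi}. (\<phi> has_real_derivative \<psi> x / u x) (at x within {0..pi})"
    using s unfolding sol_def by blast
  have h2: "\<forall>x\<in>{0..pi}. ((\<lambda>y. u y * (\<psi> y / u y)) has_real_derivative - ev * u x * \<phi> x) (at x within {0..pi})"
  proof
    fix x assume x: "x \<in> {0..pi}"
    have b: "(\<psi> has_real_derivative (- ev * u x * \<phi> x)) (at x within {0..pi})" using s x unfolding sol_def by blast
    show "((\<lambda>y. u y * (\<psi> y / u y)) has_real_derivative - ev * u x * \<phi> x) (at x within {0..pi})"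
      by (rule has_field_derivative_transform_within[OF b zero_less_one x]) (use upos in force)
  qed
  have h3: "\<exists>x\<in>{0..pi}. \<phi> x \<noteq> 0"
  proof (rule ccontr)
    assume "\<not> ?thesis"
    then have c: "\<forall>x\<in>{0..pi}. \<phi> x = 0" by blast
    have 0: "0 \<in> {0..pi}" using pi_gt_zero by simp
    have a: "(\<phi> has_real_derivative \<psi> 0 / u 0) (at 0 within {0..pi})" using s 0 unfolding sol_def by blast
    have a2: "(\<phi> has_real_derivative 0) (at 0 within {0..pi})"
      by (rule has_field_derivative_transform_within[OF DERIV_const[of 0] zero_less_one 0]) (use c in simp)
    have nb: "at (0::real) within {0..pi} \<noteq> bot"
      using at_within_Icc_at_right[OF pi_gt_zero] by simp
    have "\<psi> 0 / u 0 = 0" using has_field_derivative_unique[OF a a2 nb] .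
    then show False using one upos[OF 0] by simp
  qed
  show ?thesis unfolding dirichlet_SL_eigenvalue_def
    apply (rule exI[of _ \<phi>])
    apply (rule exI[of _ "\<lambda>x. \<psi> x / u x"])
    using h1 h2 h3 z by blast
qed

end

lemma gronwall:
  fixes F F' :: "real \<Rightarrow> real"
  assumes A: "A > 0"
    and d: "\<And>x. x \<in> {0..pi} \<Longrightarrow> (F has_real_derivative F' x) (at x within {0..pi})"
    and le: "\<And>x. x \<in> {0..pi} \<Longrightarrow> F' x \<le> A * F x + B"
    and x: "x \<in> {0..pi}"
  shows "F x \<le> (F 0 + B / A) * exp (A * x) - B / A"
proof -
  define G where "G = (\<lambda>y. (F y + B / A) * exp (- A * y))"
  define G' where "G' = (\<lambda>y. F' y * exp (- A * y) + (F y + B / A) * (exp (- A * y) * (- A)))"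
  have "G x \<le> G 0"
  proof (rule decr_sub[where S="{0..pi}" and f'=G' and f=G and a=0 and b=x])
    show "0 \<le> x" "{0..x} \<subseteq> {0..pi}" using x by auto
  next
    fix y assume y: "y \<in> {0..pi}"
    show "(G has_real_derivative G' y) (at y within {0..pi})"
      unfolding G_def G'_def
      by (rule derivative_eq_intros d[OF y] refl | simp)+
  next
    fix y assume y: "y \<in> {0..x}"
    then have y': "y \<in> {0..pi}" using x by auto
    have "G' y = (F' y - (A * F y + B)) * exp (- A * y)"
      unfolding G'_def using A by (simp add: field_simps)
    then show "G' y \<le> 0" using le[OF y'] by (simp add: mult_nonpos_nonneg)
  qed
  then have "(F x + B / A) * exp (- A * x) \<le> F 0 + B / A" unfolding G_def by simp
  then have "(F x + B / A) * exp (- A * x) * exp (A * x) \<le> (F 0 + B / A) * exp (A * x)"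
    by (rule mult_right_mono) simp
  then have "F x + B / A \<le> (F 0 + B / A) * exp (A * x)"
    by (simp add: mult.assoc exp_add[symmetric])
  then show ?thesis by simp
qed

lemma seq_deriv_limit:
  fixes f f' :: "nat \<Rightarrow> real \<Rightarrow> real"
  assumes d: "\<And>n x. x \<in> {0..pi} \<Longrightarrow> (f n has_real_derivative f' n x) (at x within {0..pi})"
    and lim: "\<And>x. x \<in> {0..pi} \<Longrightarrow> (\<lambda>n. f n x) \<longlonglongrightarrow> F x"
    and bd: "\<And>n x. x \<in> {0..pi} \<Longrightarrow> \<bar>f' n x - G x\<bar> \<le> r n"
    and r: "r \<longlonglongrightarrow> 0"
    and x: "x \<in> {0..pi}"
  shows "(F has_real_derivative G x) (at x within {0..pi})"
proof -
  have 0: "(0::real) \<in> {0..pi}" by simp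
  have c1: "convex {0..pi::real}" by simp
  have c2: "\<And>n y. y \<in> {0..pi} \<Longrightarrow> (f n has_derivative (\<lambda>h. h * f' n y)) (at y within {0..pi})"
  proof -
    fix n y assume y: "y \<in> {0..pi}"
    have e: "(\<lambda>h. h * f' n y) = (*) (f' n y)" by (auto simp: fun_eq_iff)
    show "(f n has_derivative (\<lambda>h. h * f' n y)) (at y within {0..pi})"
      using d[OF y, of n] unfolding has_field_derivative_def e .
  qed
  have c3: "\<forall>\<^sub>F n in sequentially. \<forall>y\<in>{0..pi}. \<forall>h. norm (h * f' n y - h * G y) \<le> e * norm h"
    if e: "e > 0" for e :: real
  proof -
    have "\<forall>\<^sub>F n in sequentially. r n < e" using r e by (rule order_tendstoD)
    then show ?thesis
    proof (rule eventually_mono)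
      fix n assume rn: "r n < e"
      show "\<forall>y\<in>{0..pi}. \<forall>h. norm (h * f' n y - h * G y) \<le> e * norm h"
      proof (intro ballI allI)
        fix y h assume y: "y \<in> {0..pi}"
        have "norm (h * f' n y - h * G y) = \<bar>h\<bar> * \<bar>f' n y - G y\<bar>"
          by (simp add: abs_mult[symmetric] right_diff_distrib)
        also have "\<dots> \<le> \<bar>h\<bar> * e" using bd[OF y, of n] rn by (intro mult_left_mono) auto
        finally show "norm (h * f' n y - h * G y) \<le> e * norm h" by (simp add: mult.commute)
      qed
    qed
  qed
  obtain g where g: "\<forall>y\<in>{0..pi}. (\<lambda>n. f n y) \<longlonglongrightarrow> g y \<and> (g has_derivative (\<lambda>h. h * G y)) (at y within {0..pi})"
    using has_derivative_sequence[OF c1 c2 c3 0 lim[OF 0]] by blast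
  have eq: "\<And>y. y \<in> {0..pi} \<Longrightarrow> g y = F y" using g lim LIMSEQ_unique by blast
  have ee: "(\<lambda>h. h * G x) = (*) (G x)" by (auto simp: fun_eq_iff)
  have "(g has_real_derivative G x) (at x within {0..pi})"
    using g x unfolding has_field_derivative_def ee[symmetric] by blast
  then show ?thesis
    by (rule has_field_derivative_transform_within[OF _ zero_less_one x]) (use eq in simp)
qed

lemma ab_bound:
  fixes a b p2 U m M Eb Mb e1 e2 :: real
  assumes "m > 0" "m \<le> U" "U \<le> M" "\<bar>e1\<bar> \<le> Eb" "\<bar>e2\<bar> \<le> Eb" "p2 ^ 2 \<le> Mb"
  shows "2 * a * (b / U) + 2 * b * (- e1 * U * (a + p2) + e2 * U * p2)
     \<le> (1/m + 3 * Eb * M) * (a^2 + b^2) + \<bar>e1 - e2\<bar> * (M * Mb)"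
proof -
  have U: "U > 0" using assms by linarith
  have s1: "\<bar>2 * a * b\<bar> \<le> a^2 + b^2"
    using sum_squares_bound[of a b] sum_squares_bound[of a "- b"] by (auto simp: abs_if)
  have s2: "\<bar>2 * b * p2\<bar> \<le> b^2 + p2^2"
    using sum_squares_bound[of b p2] sum_squares_bound[of b "- p2"] by (auto simp: abs_if)
  have t1: "2 * a * (b / U) \<le> (a^2 + b^2) / m"
  proof -
    have "2 * a * (b / U) = (2 * a * b) / U" by simp
    also have "\<dots> \<le> (a^2 + b^2) / U" using U s1 by (intro divide_right_mono) auto
    also have "\<dots> \<le> (a^2 + b^2) / m" using assms U by (intro divide_left_mono) auto
    finally show ?thesis .
  qed
  have t2: "- 2 * b * e1 * U * a \<le> Eb * M * (a^2 + b^2)"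
  proof -
    have "- 2 * b * e1 * U * a = - (e1 * U) * (2 * a * b)" by (simp add: algebra_simps)
    also have "\<dots> \<le> \<bar>- (e1 * U) * (2 * a * b)\<bar>" by (rule abs_ge_self)
    also have "\<dots> = \<bar>e1\<bar> * U * \<bar>2 * a * b\<bar>" using U by (simp add: abs_mult)
    also have "\<dots> \<le> Eb * M * (a^2 + b^2)" using assms U s1 by (intro mult_mono) auto
    finally show ?thesis .
  qed
  have t3: "- 2 * b * (e1 - e2) * U * p2 \<le> \<bar>e1 - e2\<bar> * M * (b^2 + Mb)"
  proof -
    have "- 2 * b * (e1 - e2) * U * p2 = - ((e1 - e2) * U) * (2 * b * p2)" by (simp add: algebra_simps)
    also have "\<dots> \<le> \<bar>- ((e1 - e2) * U) * (2 * b * p2)\<bar>" by (rule abs_ge_self)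
    also have "\<dots> = \<bar>e1 - e2\<bar> * U * \<bar>2 * b * p2\<bar>" using U by (simp add: abs_mult)
    also have "\<dots> \<le> \<bar>e1 - e2\<bar> * M * (b^2 + Mb)" using assms U s2 by (intro mult_mono) auto
    finally show ?thesis .
  qed
  have t4: "\<bar>e1 - e2\<bar> * M * b^2 \<le> 2 * Eb * M * (a^2 + b^2)"
  proof -
    have "\<bar>e1 - e2\<bar> \<le> 2 * Eb" using assms by linarith
    then have "\<bar>e1 - e2\<bar> * (M * b^2) \<le> 2 * Eb * (M * (a^2 + b^2))"
      using assms U by (intro mult_mono) auto
    then show ?thesis by (simp add: algebra_simps)
  qed
  have "2 * a * (b / U) + 2 * b * (- e1 * U * (a + p2) + e2 * U * p2)
      = 2 * a * (b / U) + (- 2 * b * e1 * U * a) + (- 2 * b * (e1 - e2) * U * p2)"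
    by (simp add: algebra_simps)
  also have "\<dots> \<le> (a^2 + b^2) / m + Eb * M * (a^2 + b^2) + \<bar>e1 - e2\<bar> * M * (b^2 + Mb)"
    using t1 t2 t3 by linarith
  also have "\<dots> \<le> (1/m + 3 * Eb * M) * (a^2 + b^2) + \<bar>e1 - e2\<bar> * (M * Mb)"
  proof -
    have e1: "(1/m + 3 * Eb * M) * (a^2 + b^2) = (a^2 + b^2) / m + Eb * M * (a^2 + b^2) + 2 * Eb * M * (a^2 + b^2)"
      using assms(1) by (simp add: field_simps)
    have e2: "\<bar>e1 - e2\<bar> * M * (b^2 + Mb) = \<bar>e1 - e2\<bar> * M * b^2 + \<bar>e1 - e2\<bar> * (M * Mb)"
      by (simp add: algebra_simps)
    show ?thesis using e1 e2 t4 by linarith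
  qed
  finally show ?thesis .
qed


lemma DERIV_sq:
  fixes f :: "real \<Rightarrow> real"
  assumes "(f has_real_derivative D) (at x within S)"
  shows "((\<lambda>y. f y ^ 2) has_real_derivative 2 * f x * D) (at x within S)"
  using DERIV_power[OF assms, of 2] by (simp add: algebra_simps)

context SL begin

lemma sol_bound:
  assumes m: "m > 0" and um: "\<forall>x\<in>{0..pi}. m \<le> u x \<and> u x \<le> M"
    and s: "sol ev \<phi> \<psi>" and z: "\<phi> 0 = 0" "\<psi> 0 = 1" and E: "\<bar>ev\<bar> \<le> Eb"
    and x: "x \<in> {0..pi}"
  shows "\<phi> x ^ 2 + \<psi> x ^ 2 \<le> exp ((1/m + 3 * Eb * M) * pi)"
proof -
  define A where "A = 1/m + 3 * Eb * M"
  have Mm: "m \<le> M" using um[rule_format, of 0] by simp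
  have Eb0: "Eb \<ge> 0" using E by linarith
  have "3 * Eb * M \<ge> 0" using Eb0 Mm m by simp
  then have A: "A > 0" unfolding A_def using m by (simp add: add_pos_nonneg)
  have "\<phi> x ^ 2 + \<psi> x ^ 2 \<le> ((\<phi> 0 ^ 2 + \<psi> 0 ^ 2) + 0 / A) * exp (A * x) - 0 / A"
  proof (rule gronwall[where F="\<lambda>y. \<phi> y ^ 2 + \<psi> y ^ 2" and A=A and B=0 and
        F'="\<lambda>y. 2 * \<phi> y * (\<psi> y / u y) + 2 * \<psi> y * (- ev * u y * (\<phi> y + 0) + ev * u y * 0)", OF A _ _ x])
    fix y assume y: "y \<in> {0..pi}"
    have d1: "(\<phi> has_real_derivative \<psi> y / u y) (at y within {0..pi})" using s y unfolding sol_def by blast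
    have d2: "(\<psi> has_real_derivative (- ev * u y * \<phi> y)) (at y within {0..pi})" using s y unfolding sol_def by blast
    show "((\<lambda>y. \<phi> y ^ 2 + \<psi> y ^ 2) has_real_derivative
        2 * \<phi> y * (\<psi> y / u y) + 2 * \<psi> y * (- ev * u y * (\<phi> y + 0) + ev * u y * 0)) (at y within {0..pi})"
      by (rule derivative_eq_intros d1 d2 refl | simp)+
    show "2 * \<phi> y * (\<psi> y / u y) + 2 * \<psi> y * (- ev * u y * (\<phi> y + 0) + ev * u y * 0)
        \<le> A * (\<phi> y ^ 2 + \<psi> y ^ 2) + 0"
      using ab_bound[OF m, of "u y" M ev Eb ev 0 0 "\<phi> y" "\<psi> y"] um y E unfolding A_def by simp
  qed
  also have "\<dots> = exp (A * x)" using z by simp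
  also have "\<dots> \<le> exp (A * pi)" using A x by simp
  finally show ?thesis unfolding A_def .
qed

lemma sol_diff:
  assumes m: "m > 0" and um: "\<forall>x\<in>{0..pi}. m \<le> u x \<and> u x \<le> M"
    and s1: "sol e1 \<phi>1 \<psi>1" and s2: "sol e2 \<phi>2 \<psi>2"
    and z: "\<phi>1 0 = \<phi>2 0" "\<psi>1 0 = \<psi>2 0" and E: "\<bar>e1\<bar> \<le> Eb" "\<bar>e2\<bar> \<le> Eb"
    and Mb: "\<forall>x\<in>{0..pi}. \<phi>2 x ^ 2 \<le> Mb"
    and x: "x \<in> {0..pi}"
  shows "(\<phi>1 x - \<phi>2 x) ^ 2 + (\<psi>1 x - \<psi>2 x) ^ 2
     \<le> \<bar>e1 - e2\<bar> * (M * Mb / (1/m + 3 * Eb * M) * exp ((1/m + 3 * Eb * M) * pi))"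
proof -
  define A where "A = 1/m + 3 * Eb * M"
  define B where "B = \<bar>e1 - e2\<bar> * (M * Mb)"
  have Mm: "m \<le> M" using um[rule_format, of 0] by simp
  have Eb0: "Eb \<ge> 0" using E by linarith
  have "3 * Eb * M \<ge> 0" using Eb0 Mm m by simp
  then have A: "A > 0" unfolding A_def using m by (simp add: add_pos_nonneg)
  have Mb0: "Mb \<ge> 0" using Mb[rule_format, OF x] zero_le_power2[of "\<phi>2 x"] by linarith
  have B: "B \<ge> 0" unfolding B_def using Mb0 m Mm by simp
  let ?F = "\<lambda>y. (\<phi>1 y - \<phi>2 y) ^ 2 + (\<psi>1 y - \<psi>2 y) ^ 2"
  have "?F x \<le> (?F 0 + B / A) * exp (A * x) - B / A"
  proof (rule gronwall[where F="?F" and A=A and B=B and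
        F'="\<lambda>y. 2 * (\<phi>1 y - \<phi>2 y) * ((\<psi>1 y - \<psi>2 y) / u y) + 2 * (\<psi>1 y - \<psi>2 y) * (- e1 * u y * ((\<phi>1 y - \<phi>2 y) + \<phi>2 y) + e2 * u y * \<phi>2 y)", OF A _ _ x])
    fix y assume y: "y \<in> {0..pi}"
    have d1: "(\<phi>1 has_real_derivative \<psi>1 y / u y) (at y within {0..pi})" using s1 y unfolding sol_def by blast
    have d2: "(\<psi>1 has_real_derivative (- e1 * u y * \<phi>1 y)) (at y within {0..pi})" using s1 y unfolding sol_def by blast
    have d3: "(\<phi>2 has_real_derivative \<psi>2 y / u y) (at y within {0..pi})" using s2 y unfolding sol_def by blast
    have d4: "(\<psi>2 has_real_derivative (- e2 * u y * \<phi>2 y)) (at y within {0..pi})" using s2 y unfolding sol_def by blast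
    have uy: "u y \<noteq> 0" using upos[OF y] by simp
    have "(?F has_real_derivative
        2 * (\<phi>1 y - \<phi>2 y) * (\<psi>1 y / u y - \<psi>2 y / u y) + 2 * (\<psi>1 y - \<psi>2 y) * (- e1 * u y * \<phi>1 y - (- e2 * u y * \<phi>2 y))) (at y within {0..pi})"
      by (intro DERIV_add DERIV_sq DERIV_diff d1 d2 d3 d4)
    moreover have "2 * (\<phi>1 y - \<phi>2 y) * (\<psi>1 y / u y - \<psi>2 y / u y) + 2 * (\<psi>1 y - \<psi>2 y) * (- e1 * u y * \<phi>1 y - (- e2 * u y * \<phi>2 y))
       = 2 * (\<phi>1 y - \<phi>2 y) * ((\<psi>1 y - \<psi>2 y) / u y) + 2 * (\<psi>1 y - \<psi>2 y) * (- e1 * u y * ((\<phi>1 y - \<phi>2 y) + \<phi>2 y) + e2 * u y * \<phi>2 y)"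
      by (simp add: diff_divide_distrib algebra_simps)
    ultimately show "(?F has_real_derivative 2 * (\<phi>1 y - \<phi>2 y) * ((\<psi>1 y - \<psi>2 y) / u y) + 2 * (\<psi>1 y - \<psi>2 y) * (- e1 * u y * ((\<phi>1 y - \<phi>2 y) + \<phi>2 y) + e2 * u y * \<phi>2 y)) (at y within {0..pi})"
      by simp
    show "2 * (\<phi>1 y - \<phi>2 y) * ((\<psi>1 y - \<psi>2 y) / u y) + 2 * (\<psi>1 y - \<psi>2 y) * (- e1 * u y * ((\<phi>1 y - \<phi>2 y) + \<phi>2 y) + e2 * u y * \<phi>2 y)
        \<le> A * ?F y + B"
      using ab_bound[OF m, of "u y" M e1 Eb e2 "\<phi>2 y" Mb "\<phi>1 y - \<phi>2 y" "\<psi>1 y - \<psi>2 y"] um y E Mb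
      unfolding A_def B_def by simp
  qed
  also have "\<dots> = B / A * exp (A * x) - B / A" using z by simp
  also have "\<dots> \<le> B / A * exp (A * pi)"
  proof -
    have "B / A \<ge> 0" using A B by simp
    moreover have "exp (A * x) \<le> exp (A * pi)" using A x by simp
    ultimately have "B / A * exp (A * x) \<le> B / A * exp (A * pi)" by (intro mult_left_mono)
    then show ?thesis using \<open>B / A \<ge> 0\<close> by linarith
  qed
  also have "\<dots> = \<bar>e1 - e2\<bar> * (M * Mb / A * exp (A * pi))" unfolding B_def by simp
  finally show ?thesis unfolding A_def .
qed

lemma eig_limit:
  assumes ev: "\<And>n. dirichlet_SL_eigenvalue u (e n)" and lim: "e \<longlonglongrightarrow> L"
  shows "dirichlet_SL_eigenvalue u L"
proof -
  obtain m M D1 D2 where b: "m > 0" "\<forall>x\<in>{0..pi}. m \<le> u x \<and> u x \<le> M \<and> \<bar>u' x\<bar> \<le> D1 \<and> \<bar>u'' x\<bar> \<le> D2"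
    using bounds by blast
  have um: "\<forall>x\<in>{0..pi}. m \<le> u x \<and> u x \<le> M" using b(2) by blast
  have Mm: "m \<le> M" using um[rule_format, of 0] by simp
  obtain Eb0 where Eb0: "Eb0 > 0" "\<And>n. \<bar>e n\<bar> \<le> Eb0"
    using Cauchy_Bseq[OF LIMSEQ_imp_Cauchy[OF lim]] by (auto elim: BseqE)
  define Eb where "Eb = Eb0 + \<bar>L\<bar>"
  have Eb: "\<And>n. \<bar>e n\<bar> \<le> Eb" "\<bar>L\<bar> \<le> Eb" "Eb \<ge> 0" using Eb0 unfolding Eb_def by (auto intro: add_increasing2)
  have "\<forall>n. \<exists>\<phi> \<psi>. sol (e n) \<phi> \<psi> \<and> \<phi> 0 = 0 \<and> \<phi> pi = 0 \<and> \<psi> 0 = 1"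
    using eig_norm ev by blast
  then obtain \<phi> \<psi> where s: "\<And>n. sol (e n) (\<phi> n) (\<psi> n)" "\<And>n. \<phi> n 0 = 0" "\<And>n. \<phi> n pi = 0" "\<And>n. \<psi> n 0 = 1"
    by (auto simp: choice_iff)
  define A where "A = 1/m + 3 * Eb * M"
  define Mb where "Mb = exp (A * pi)"
  define Kd where "Kd = M * Mb / A * exp (A * pi)"
  have "3 * Eb * M \<ge> 0" using Eb Mm b(1) by simp
  then have A: "A > 0" unfolding A_def using b(1) by (simp add: add_pos_nonneg)
  have Kd: "Kd \<ge> 0" unfolding Kd_def Mb_def using A Mm b(1) by simp
  have bnd: "\<And>n x. x \<in> {0..pi} \<Longrightarrow> \<phi> n x ^ 2 + \<psi> n x ^ 2 \<le> Mb"
    unfolding Mb_def A_def using sol_bound[OF b(1) um s(1) s(2) s(4) Eb(1)] by blast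
  have bnd1: "\<And>n x. x \<in> {0..pi} \<Longrightarrow> \<phi> n x ^ 2 \<le> Mb"
    using bnd by (smt (verit) zero_le_power2)
  have diff: "\<And>n k x. x \<in> {0..pi} \<Longrightarrow> (\<phi> n x - \<phi> k x) ^ 2 + (\<psi> n x - \<psi> k x) ^ 2 \<le> \<bar>e n - e k\<bar> * Kd"
  proof -
    fix n k x assume x: "x \<in> {0..pi}"
    show "(\<phi> n x - \<phi> k x) ^ 2 + (\<psi> n x - \<psi> k x) ^ 2 \<le> \<bar>e n - e k\<bar> * Kd"
      using sol_diff[OF b(1) um s(1)[of n] s(1)[of k] _ _ Eb(1)[of n] Eb(1)[of k] _ x, of Mb]
        s(2) s(4) bnd1 unfolding Kd_def A_def by simp
  qed
  have diff1: "\<And>n k x. x \<in> {0..pi} \<Longrightarrow> (\<phi> n x - \<phi> k x) ^ 2 \<le> \<bar>e n - e k\<bar> * Kd"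
    using diff by (smt (verit) zero_le_power2)
  have diff2: "\<And>n k x. x \<in> {0..pi} \<Longrightarrow> (\<psi> n x - \<psi> k x) ^ 2 \<le> \<bar>e n - e k\<bar> * Kd"
    using diff by (smt (verit) zero_le_power2)
  have cauchy: "Cauchy (\<lambda>n. g n x)"
    if g: "\<And>n k. (g n x - g k x) ^ 2 \<le> \<bar>e n - e k\<bar> * Kd" for g :: "nat \<Rightarrow> real \<Rightarrow> real" and x
  proof (rule CauchyI)
    fix \<epsilon> :: real assume \<epsilon>: "\<epsilon> > 0"
    have "\<epsilon>^2 / (Kd + 1) > 0" using \<epsilon> Kd by simp
    then obtain N where N: "\<forall>n\<ge>N. \<forall>k\<ge>N. norm (e n - e k) < \<epsilon>^2 / (Kd + 1)"
      using CauchyD[OF LIMSEQ_imp_Cauchy[OF lim]] by blast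
    show "\<exists>N. \<forall>n\<ge>N. \<forall>k\<ge>N. norm (g n x - g k x) < \<epsilon>"
    proof (intro exI allI impI)
      fix n k assume nk: "N \<le> n" "N \<le> k"
      have en: "\<bar>e n - e k\<bar> < \<epsilon>^2 / (Kd + 1)" using N nk by auto
      have "\<bar>e n - e k\<bar> * Kd \<le> \<epsilon>^2 / (Kd + 1) * Kd" using en Kd by (intro mult_right_mono) auto
      also have "\<dots> < \<epsilon>^2"
      proof -
        have "\<epsilon>^2 / (Kd + 1) * Kd = \<epsilon>^2 * (Kd / (Kd + 1))" by simp
        also have "\<dots> < \<epsilon>^2 * 1" using Kd \<epsilon> by (intro mult_strict_left_mono) auto
        finally show ?thesis by simp
      qed
      finally have lt: "(g n x - g k x) ^ 2 < \<epsilon>^2" using g[of n k] by linarith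
      then have sqlt: "\<bar>g n x - g k x\<bar> ^ 2 < \<epsilon> ^ 2" by simp
      have "\<bar>g n x - g k x\<bar> < \<epsilon>" by (rule power_less_imp_less_base[OF sqlt]) (use \<epsilon> in simp)
      then show "norm (g n x - g k x) < \<epsilon>" by simp
    qed
  qed
  define \<Phi> where "\<Phi> x = lim (\<lambda>n. \<phi> n x)" for x
  define \<Psi> where "\<Psi> x = lim (\<lambda>n. \<psi> n x)" for x
  have l1: "(\<lambda>n. \<phi> n x) \<longlonglongrightarrow> \<Phi> x" if x: "x \<in> {0..pi}" for x
    using cauchy[of \<phi> x] diff1[OF x] unfolding \<Phi>_def
    by (simp add: Cauchy_convergent_iff convergent_LIMSEQ_iff)
  have l2: "(\<lambda>n. \<psi> n x) \<longlonglongrightarrow> \<Psi> x" if x: "x \<in> {0..pi}" for x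
    using cauchy[of \<psi> x] diff2[OF x] unfolding \<Psi>_def
    by (simp add: Cauchy_convergent_iff convergent_LIMSEQ_iff)
  have est: "(g n x - G x) ^ 2 \<le> \<bar>e n - L\<bar> * Kd"
    if g: "\<And>k. (g n x - g k x) ^ 2 \<le> \<bar>e n - e k\<bar> * Kd" and gl: "(\<lambda>k. g k x) \<longlonglongrightarrow> G x"
    for g :: "nat \<Rightarrow> real \<Rightarrow> real" and G n x
  proof (rule LIMSEQ_le)
    show "(\<lambda>k. (g n x - g k x) ^ 2) \<longlonglongrightarrow> (g n x - G x) ^ 2" by (intro tendsto_intros gl)
    show "(\<lambda>k. \<bar>e n - e k\<bar> * Kd) \<longlonglongrightarrow> \<bar>e n - L\<bar> * Kd" by (intro tendsto_intros lim)
    show "\<exists>N. \<forall>k\<ge>N. (g n x - g k x) ^ 2 \<le> \<bar>e n - e k\<bar> * Kd" using g by blast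
  qed
  define r0 where "r0 n = sqrt (\<bar>e n - L\<bar> * Kd)" for n
  have r0: "r0 \<longlonglongrightarrow> 0"
  proof -
    have "(\<lambda>n. sqrt (\<bar>e n - L\<bar> * Kd)) \<longlonglongrightarrow> sqrt (\<bar>L - L\<bar> * Kd)" by (intro tendsto_intros lim)
    then show ?thesis unfolding r0_def by simp
  qed
  have sq: "\<bar>a\<bar> \<le> sqrt c" if "a ^ 2 \<le> c" for a c :: real
    using real_sqrt_le_mono[OF that] by simp
  have e1: "\<bar>\<phi> n x - \<Phi> x\<bar> \<le> r0 n" if x: "x \<in> {0..pi}" for n x
    unfolding r0_def by (rule sq, rule est[where g=\<phi> and G=\<Phi>, OF diff1[OF x] l1[OF x]])
  have e2: "\<bar>\<psi> n x - \<Psi> x\<bar> \<le> r0 n" if x: "x \<in> {0..pi}" for n x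
    unfolding r0_def by (rule sq, rule est[where g=\<psi> and G=\<Psi>, OF diff2[OF x] l2[OF x]])
  have pb: "\<bar>\<phi> n x\<bar> \<le> sqrt Mb" if x: "x \<in> {0..pi}" for n x
    by (rule sq, rule bnd1[OF x])
  have sL: "sol L \<Phi> \<Psi>" unfolding sol_def
  proof (intro conjI ballI)
    fix x assume x: "x \<in> {0..pi}"
    show "(\<Phi> has_real_derivative \<Psi> x / u x) (at x within {0..pi})"
    proof (rule seq_deriv_limit[where f=\<phi> and f'="\<lambda>n y. \<psi> n y / u y" and r="\<lambda>n. r0 n / m", OF _ l1 _ _ x])
      fix n y assume y: "y \<in> {0..pi}"
      show "(\<phi> n has_real_derivative \<psi> n y / u y) (at y within {0..pi})" using s(1)[of n] y unfolding sol_def by blast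
      have uy: "u y \<ge> m" using um y by blast
      have "\<bar>\<psi> n y / u y - \<Psi> y / u y\<bar> = \<bar>\<psi> n y - \<Psi> y\<bar> / u y"
        using uy b(1) by (simp add: diff_divide_distrib[symmetric])
      also have "\<dots> \<le> r0 n / u y" using e2[OF y, of n] uy b(1) by (intro divide_right_mono) auto
      also have "\<dots> \<le> r0 n / m" using uy b(1) e2[OF y, of n] by (intro divide_left_mono) auto
      finally show "\<bar>\<psi> n y / u y - \<Psi> y / u y\<bar> \<le> r0 n / m" .
    next
      show "(\<lambda>n. r0 n / m) \<longlonglongrightarrow> 0" using tendsto_divide_zero[OF r0, of m] by simp
    qed
    show "(\<Psi> has_real_derivative - L * u x * \<Phi> x) (at x within {0..pi})"
    proof (rule seq_deriv_limit[where f=\<psi> and f'="\<lambda>n y. - e n * u y * \<phi> n y"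
          and r="\<lambda>n. M * (\<bar>e n - L\<bar> * sqrt Mb + Eb * r0 n)", OF _ l2 _ _ x])
      fix n y assume y: "y \<in> {0..pi}"
      show "(\<psi> n has_real_derivative - e n * u y * \<phi> n y) (at y within {0..pi})" using s(1)[of n] y unfolding sol_def by blast
      have uy: "u y \<ge> m" "u y \<le> M" using um y by auto
      have "\<bar>- e n * u y * \<phi> n y - - L * u y * \<Phi> y\<bar> = u y * \<bar>(e n - L) * \<phi> n y + L * (\<phi> n y - \<Phi> y)\<bar>"
      proof -
        have "- e n * u y * \<phi> n y - - L * u y * \<Phi> y = u y * (- ((e n - L) * \<phi> n y + L * (\<phi> n y - \<Phi> y)))"
          by (simp add: algebra_simps)
        then show ?thesis using uy b(1) by (simp add: abs_mult)
      qed
      also have "\<dots> \<le> M * (\<bar>e n - L\<bar> * sqrt Mb + Eb * r0 n)"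
      proof (rule mult_mono)
        show "u y \<le> M" using uy by simp
        have "\<bar>(e n - L) * \<phi> n y + L * (\<phi> n y - \<Phi> y)\<bar> \<le> \<bar>e n - L\<bar> * \<bar>\<phi> n y\<bar> + \<bar>L\<bar> * \<bar>\<phi> n y - \<Phi> y\<bar>"
          by (metis abs_mult abs_triangle_ineq)
        also have "\<dots> \<le> \<bar>e n - L\<bar> * sqrt Mb + Eb * r0 n"
          using pb[OF y, of n] e1[OF y, of n] Eb(2) by (intro add_mono mult_mono) auto
        finally show "\<bar>(e n - L) * \<phi> n y + L * (\<phi> n y - \<Phi> y)\<bar> \<le> \<bar>e n - L\<bar> * sqrt Mb + Eb * r0 n" .
        show "0 \<le> M" using Mm b(1) by simp
      qed simp
      finally show "\<bar>- e n * u y * \<phi> n y - - L * u y * \<Phi> y\<bar> \<le> M * (\<bar>e n - L\<bar> * sqrt Mb + Eb * r0 n)" .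
    next
      have "(\<lambda>n. M * (\<bar>e n - L\<bar> * sqrt Mb + Eb * r0 n)) \<longlonglongrightarrow> M * (\<bar>L - L\<bar> * sqrt Mb + Eb * 0)"
        by (intro tendsto_intros lim r0)
      then show "(\<lambda>n. M * (\<bar>e n - L\<bar> * sqrt Mb + Eb * r0 n)) \<longlonglongrightarrow> 0" by simp
    qed
  qed
  have 0: "(0::real) \<in> {0..pi}" and p: "pi \<in> {0..pi}" by auto
  have "\<Phi> 0 = 0" using LIMSEQ_unique[OF l1[OF 0]] s(2) by simp
  moreover have "\<Phi> pi = 0" using LIMSEQ_unique[OF l1[OF p]] s(3) by simp
  moreover have "\<Psi> 0 = 1" using LIMSEQ_unique[OF l2[OF 0]] s(4) by simp
  ultimately show ?thesis using eig_intro[OF sL] by blast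
qed

end

lemma gronwall_back:
  fixes F F' :: "real \<Rightarrow> real"
  assumes A: "A \<ge> 0"
    and d: "\<And>x. x \<in> {0..pi} \<Longrightarrow> (F has_real_derivative F' x) (at x within {0..pi})"
    and le: "\<And>x. x \<in> {0..pi} \<Longrightarrow> F' x \<ge> - A * F x"
    and x: "x \<in> {0..pi}"
  shows "F x \<le> F pi * exp (A * (pi - x))"
proof -
  define G where "G = (\<lambda>y. - (F y * exp (A * y)))"
  define G' where "G' = (\<lambda>y. - (F' y * exp (A * y) + F y * (exp (A * y) * A)))"
  have "G pi \<le> G x"
  proof (rule decr_sub[where S="{0..pi}" and f'=G' and f=G and a=x and b=pi])
    show "x \<le> pi" "{x..pi} \<subseteq> {0..pi}" using x by auto
  next
    fix y assume y: "y \<in> {0..pi}"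
    show "(G has_real_derivative G' y) (at y within {0..pi})"
      unfolding G_def G'_def
      by (rule derivative_eq_intros d[OF y] refl | simp)+
  next
    fix y assume y: "y \<in> {x..pi}"
    then have y': "y \<in> {0..pi}" using x by auto
    have "G' y = - ((F' y + A * F y) * exp (A * y))"
      unfolding G'_def by (simp add: algebra_simps)
    then show "G' y \<le> 0" using le[OF y'] by simp
  qed
  then have "F x * exp (A * x) \<le> F pi * exp (A * pi)" unfolding G_def by simp
  then have "F x * exp (A * x) / exp (A * x) \<le> F pi * exp (A * pi) / exp (A * x)"
    by (intro divide_right_mono) auto
  moreover have "F pi * exp (A * pi) / exp (A * x) = F pi * exp (A * (pi - x))"
    by (simp add: exp_diff right_diff_distrib)
  ultimately show ?thesis by simp
qed

context SL begin

lemma W_deriv: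
  assumes s: "sol ev \<phi> \<psi>" and ev: "ev > 0" and y: "y \<in> {0..pi}"
    and \<omega>: "\<omega> = sqrt ev" and g: "g = (\<lambda>y. sqrt (u y))"
  shows "((\<lambda>y. \<psi> y * (sin (\<omega> * y) / g y) - \<phi> y * (- (u' y * sin (\<omega> * y)) / (2 * g y) + \<omega> * (g y * cos (\<omega> * y))))
     has_real_derivative - \<phi> y * sin (\<omega> * y) * (u' y ^ 2 / (4 * g y ^ 3) - u'' y / (2 * g y))) (at y within {0..pi})"
proof -
  have uy: "u y > 0" using upos[OF y] .
  have gy: "g y > 0" using uy g by simp
  have gsq: "u y = g y ^ 2" using uy g by simp
  have evw: "ev = \<omega> ^ 2" using ev \<omega> by simp
  have dg: "(g has_real_derivative u' y / (2 * g y)) (at y within {0..pi})"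
  proof -
    have "((\<lambda>x. sqrt (u x)) has_real_derivative inverse (sqrt (u y)) / 2 * u' y) (at y within {0..pi})"
      using DERIV_chain2[OF DERIV_real_sqrt[OF uy] du[OF y]] .
    moreover have e: "inverse (sqrt (u y)) / 2 * u' y = u' y / (2 * g y)" using g by (simp add: field_simps)
    ultimately show ?thesis unfolding g by (simp only: e[unfolded g])
  qed
  have d1: "(\<phi> has_real_derivative \<psi> y / u y) (at y within {0..pi})" using s y unfolding sol_def by blast
  have d2: "(\<psi> has_real_derivative (- ev * u y * \<phi> y)) (at y within {0..pi})" using s y unfolding sol_def by blast
  have du1: "(u has_real_derivative u' y) (at y within {0..pi})" using du[OF y] .
  have du2: "(u' has_real_derivative u'' y) (at y within {0..pi})" using du'[OF y] .
  have gne: "g y \<noteq> 0" using gy by simp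
  show ?thesis
    apply (rule derivative_eq_intros d1 d2 dg du1 du2 refl | simp add: gne)+
    using gne unfolding gsq evw by (simp add: field_simps power2_eq_square power3_eq_cube)
qed

lemma E_deriv:
  assumes s: "sol ev \<phi> \<psi>" and y: "y \<in> {0..pi}"
  shows "((\<lambda>y. \<psi> y ^ 2 + ev * (u y ^ 2 * \<phi> y ^ 2)) has_real_derivative 2 * ev * u y * u' y * \<phi> y ^ 2) (at y within {0..pi})"
proof -
  have uy: "u y \<noteq> 0" using upos[OF y] by simp
  have d1: "(\<phi> has_real_derivative \<psi> y / u y) (at y within {0..pi})" using s y unfolding sol_def by blast
  have d2: "(\<psi> has_real_derivative (- ev * u y * \<phi> y)) (at y within {0..pi})" using s y unfolding sol_def by blast
  have du1: "(u has_real_derivative u' y) (at y within {0..pi})" using du[OF y] .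
  show ?thesis
    apply (rule derivative_eq_intros d1 d2 du1 refl | simp)+
    using uy by (simp add: field_simps power2_eq_square)
qed

lemma sin_est: "\<exists>C. \<forall>ev. dirichlet_SL_eigenvalue u ev \<longrightarrow> ev > 0 \<longrightarrow> \<bar>sin (sqrt ev * pi)\<bar> \<le> C / sqrt ev"
proof -
  obtain m M D1 D2 where b: "m > 0" "\<forall>x\<in>{0..pi}. m \<le> u x \<and> u x \<le> M \<and> \<bar>u' x\<bar> \<le> D1 \<and> \<bar>u'' x\<bar> \<le> D2"
    using bounds by blast
  have "\<bar>u' 0\<bar> \<le> D1" "\<bar>u'' 0\<bar> \<le> D2" using b(2) by simp_all
  then have D1: "D1 \<ge> 0" and D2: "D2 \<ge> 0" using abs_ge_zero[of "u' 0"] abs_ge_zero[of "u'' 0"] by linarith+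
  define K where "K = D1 / m"
  have K: "K \<ge> 0" unfolding K_def using D1 b(1) by simp
  define Rb where "Rb = D1 ^ 2 / (4 * sqrt m ^ 3) + D2 / (2 * sqrt m)"
  define C where "C = sqrt M * pi * Rb * exp (K * pi) / m"
  show ?thesis
  proof (intro exI[of _ C] allI impI)
    fix ev assume eig: "dirichlet_SL_eigenvalue u ev" and ev: "ev > 0"
    obtain \<phi> \<psi> where s: "sol ev \<phi> \<psi>" and z: "\<phi> 0 = 0" "\<phi> pi = 0" "\<psi> 0 = 1"
      using eig_norm[OF eig] by blast
    define \<omega> where "\<omega> = sqrt ev"
    define g where "g = (\<lambda>y. sqrt (u y))"
    have \<omega>: "\<omega> > 0" "\<omega> ^ 2 = ev" using ev unfolding \<omega>_def by auto
    define E where "E = (\<lambda>y. \<psi> y ^ 2 + ev * (u y ^ 2 * \<phi> y ^ 2))"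
    have Eb: "E x \<le> E pi * exp (2 * K * (pi - x))" if x: "x \<in> {0..pi}" for x
    proof (rule gronwall_back[where F=E and A="2 * K" and F' = "\<lambda>y. 2 * ev * u y * u' y * \<phi> y ^ 2", OF _ _ _ x])
      show "0 \<le> 2 * K" using K by simp
      fix y assume y: "y \<in> {0..pi}"
      show "(E has_real_derivative 2 * ev * u y * u' y * \<phi> y ^ 2) (at y within {0..pi})"
        unfolding E_def by (rule E_deriv[OF s y])
      have uy: "m \<le> u y" "\<bar>u' y\<bar> \<le> D1" using b(2) y by auto
      have up: "u y > 0" using upos[OF y] .
      have a0: "ev * u y * \<phi> y ^ 2 \<ge> 0" using ev up by simp
      have h1: "- D1 \<le> u' y" using uy(2) by (simp add: abs_le_iff)
      have A1: "- (2 * D1 * (ev * u y * \<phi> y ^ 2)) \<le> 2 * ev * u y * u' y * \<phi> y ^ 2"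
      proof -
        have a: "(2 * (ev * u y * \<phi> y ^ 2)) * (- D1) \<le> (2 * (ev * u y * \<phi> y ^ 2)) * u' y"
          apply (rule mult_left_mono) using a0 h1 by simp_all
        have e1: "(2 * (ev * u y * \<phi> y ^ 2)) * (- D1) = - (2 * D1 * (ev * u y * \<phi> y ^ 2))" by algebra
        have e2: "(2 * (ev * u y * \<phi> y ^ 2)) * u' y = 2 * ev * u y * u' y * \<phi> y ^ 2" by algebra
        show ?thesis using a unfolding e1 e2 .
      qed
      have h3: "D1 \<le> K * u y"
      proof -
        have "D1 * m \<le> D1 * u y" apply (rule mult_left_mono) using uy D1 by simp_all
        then show ?thesis unfolding K_def using b(1) by (simp add: field_simps)
      qed
      have A2: "2 * D1 * (ev * u y * \<phi> y ^ 2) \<le> 2 * K * E y"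
      proof -
        have "(2 * D1) * (ev * u y * \<phi> y ^ 2) \<le> (2 * (K * u y)) * (ev * u y * \<phi> y ^ 2)"
          apply (rule mult_right_mono) using a0 h3 by simp_all
        also have "\<dots> = 2 * K * (ev * (u y ^ 2 * \<phi> y ^ 2))" by algebra
        also have "\<dots> \<le> 2 * K * E y"
        proof (rule mult_left_mono)
          show "ev * (u y ^ 2 * \<phi> y ^ 2) \<le> E y" unfolding E_def by simp
          show "0 \<le> 2 * K" using K by simp
        qed
        finally show ?thesis .
      qed
      have "- (2 * K) * E y = - (2 * K * E y)" by simp
      then show "2 * ev * u y * u' y * \<phi> y ^ 2 \<ge> - (2 * K) * E y" using A1 A2 by linarith
    qed
    have Epi: "E pi = \<psi> pi ^ 2" unfolding E_def using z by simp
    have E0: "E 0 = 1" unfolding E_def using z by simp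
    have psipi: "\<psi> pi \<noteq> 0"
    proof
      assume "\<psi> pi = 0"
      then have "E 0 \<le> 0" using Eb[of 0] Epi by simp
      then show False using E0 by simp
    qed
    define P where "P = \<bar>\<psi> pi\<bar> * exp (K * pi) / (\<omega> * m)"
    have P0: "P \<ge> 0" unfolding P_def using \<omega> b(1) by simp
    have phib: "\<bar>\<phi> x\<bar> \<le> P" if x: "x \<in> {0..pi}" for x
    proof -
      have ux: "m \<le> u x" using b(2) x by auto
      have "exp (2 * K * (pi - x)) \<le> exp (2 * K * pi)" using K x by (simp add: mult_left_mono)
      then have "E x \<le> \<psi> pi ^ 2 * exp (2 * K * pi)" using Eb[OF x] Epi by (smt (verit) mult_left_mono zero_le_power2)
      moreover have "ev * (m ^ 2 * \<phi> x ^ 2) \<le> ev * (u x ^ 2 * \<phi> x ^ 2)"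
      proof (rule mult_left_mono)
        have "m ^ 2 \<le> u x ^ 2" apply (rule power_mono) using ux b(1) by simp_all
        then show "m ^ 2 * \<phi> x ^ 2 \<le> u x ^ 2 * \<phi> x ^ 2" apply (rule mult_right_mono) by simp
        show "0 \<le> ev" using ev by simp
      qed
      moreover have "ev * (u x ^ 2 * \<phi> x ^ 2) \<le> E x" unfolding E_def by simp
      ultimately have "ev * m ^ 2 * \<phi> x ^ 2 \<le> \<psi> pi ^ 2 * exp (2 * K * pi)" by (simp add: mult.assoc)
      then have "\<phi> x ^ 2 \<le> \<psi> pi ^ 2 * exp (2 * K * pi) / (ev * m ^ 2)"
        using ev b(1) by (simp add: field_simps)
      also have "\<dots> = P ^ 2" unfolding P_def using \<omega> b(1)
        by (simp add: power_divide power_mult_distrib exp_double[symmetric] mult.assoc)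
      finally have "\<bar>\<phi> x\<bar> ^ 2 \<le> P ^ 2" by simp
      then show ?thesis using P0 by (rule power2_le_imp_le)
    qed
    define R where "R = (\<lambda>y. u' y ^ 2 / (4 * g y ^ 3) - u'' y / (2 * g y))"
    have Rb: "\<bar>R y\<bar> \<le> Rb" if y: "y \<in> {0..pi}" for y
    proof -
      have uy: "m \<le> u y" "\<bar>u' y\<bar> \<le> D1" "\<bar>u'' y\<bar> \<le> D2" using b(2) y by auto
      have gy: "sqrt m \<le> g y" unfolding g_def using uy by simp
      have sm: "sqrt m > 0" using b(1) by simp
      have t1: "u' y ^ 2 / (4 * g y ^ 3) \<le> D1 ^ 2 / (4 * sqrt m ^ 3)"
      proof (rule frac_le)
        show "0 \<le> D1 ^ 2" by simp
        show "u' y ^ 2 \<le> D1 ^ 2" using uy by (metis abs_le_square_iff abs_of_nonneg D1 power2_abs)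
        show "0 < 4 * sqrt m ^ 3" using sm by simp
        show "4 * sqrt m ^ 3 \<le> 4 * g y ^ 3" using gy sm by (simp add: power_mono)
      qed
      have t2: "\<bar>u'' y\<bar> / (2 * g y) \<le> D2 / (2 * sqrt m)"
        using uy gy sm D2 by (intro frac_le) auto
      have gp: "g y > 0" using gy sm by linarith
      have t0: "u' y ^ 2 / (4 * g y ^ 3) \<ge> 0" using gp by simp
      have "\<bar>R y\<bar> \<le> \<bar>u' y ^ 2 / (4 * g y ^ 3)\<bar> + \<bar>u'' y / (2 * g y)\<bar>" unfolding R_def by (rule abs_triangle_ineq4)
      also have "\<dots> = u' y ^ 2 / (4 * g y ^ 3) + \<bar>u'' y\<bar> / (2 * g y)" using gp t0 by (simp add: abs_div)
      also have "\<dots> \<le> Rb" unfolding Rb_def using t1 t2 by linarith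
      finally show ?thesis .
    qed
    define W where "W = (\<lambda>y. \<psi> y * (sin (\<omega> * y) / g y) - \<phi> y * (- (u' y * sin (\<omega> * y)) / (2 * g y) + \<omega> * (g y * cos (\<omega> * y))))"
    have dW: "(W has_real_derivative - \<phi> y * sin (\<omega> * y) * R y) (at y within {0..pi})" if y: "y \<in> {0..pi}" for y
      unfolding W_def R_def by (rule W_deriv[OF s ev y \<omega>_def g_def])
    define B where "B = P * Rb"
    have dWb: "\<bar>- \<phi> y * sin (\<omega> * y) * R y\<bar> \<le> B" if y: "y \<in> {0..pi}" for y
    proof -
      have "\<bar>- \<phi> y * sin (\<omega> * y) * R y\<bar> = \<bar>\<phi> y\<bar> * \<bar>sin (\<omega> * y)\<bar> * \<bar>R y\<bar>" by (simp add: abs_mult)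
      also have "\<dots> \<le> P * 1 * Rb"
        using phib[OF y] Rb[OF y] P0 by (intro mult_mono) auto
      finally show ?thesis unfolding B_def by simp
    qed
    have W1: "W pi - B * pi \<le> W 0 - B * 0"
    proof (rule decr_sub[where S="{0..pi}" and f="\<lambda>y. W y - B * y" and f'="\<lambda>y. - \<phi> y * sin (\<omega> * y) * R y - B" and a=0 and b=pi])
      show "0 \<le> pi" "{0..pi} \<subseteq> {0..pi}" by auto
    next
      fix y assume y: "y \<in> {0..pi}"
      show "((\<lambda>y. W y - B * y) has_real_derivative - \<phi> y * sin (\<omega> * y) * R y - B) (at y within {0..pi})"
        using DERIV_diff[OF dW[OF y] DERIV_cmult_Id[of B]] by simp
    next
      fix y assume y: "y \<in> {0..pi}"
      show "- \<phi> y * sin (\<omega> * y) * R y - B \<le> 0" using dWb[OF y] by linarith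
    qed
    have W2: "- W pi - B * pi \<le> - W 0 - B * 0"
    proof (rule decr_sub[where S="{0..pi}" and f="\<lambda>y. - W y - B * y" and f'="\<lambda>y. - (- \<phi> y * sin (\<omega> * y) * R y) - B" and a=0 and b=pi])
      show "0 \<le> pi" "{0..pi} \<subseteq> {0..pi}" by auto
    next
      fix y assume y: "y \<in> {0..pi}"
      show "((\<lambda>y. - W y - B * y) has_real_derivative - (- \<phi> y * sin (\<omega> * y) * R y) - B) (at y within {0..pi})"
        using DERIV_diff[OF DERIV_minus[OF dW[OF y]] DERIV_cmult_Id[of B]] by simp
    next
      fix y assume y: "y \<in> {0..pi}"
      show "- (- \<phi> y * sin (\<omega> * y) * R y) - B \<le> 0" using dWb[OF y] by linarith
    qed
    have W0: "W 0 = 0" unfolding W_def using z by simp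
    have Wpi: "W pi = \<psi> pi * sin (\<omega> * pi) / g pi" unfolding W_def using z by simp
    have gpi: "g pi > 0" "g pi \<le> sqrt M" unfolding g_def using upos[of pi] b(2) by auto
    have "\<bar>\<psi> pi * sin (\<omega> * pi) / g pi\<bar> \<le> B * pi" using W1 W2 W0 Wpi by linarith
    then have "\<bar>\<psi> pi\<bar> * \<bar>sin (\<omega> * pi)\<bar> \<le> B * pi * g pi" using gpi by (simp add: abs_mult abs_div field_simps)
    also have "\<dots> = \<bar>\<psi> pi\<bar> * (exp (K * pi) * Rb * pi * g pi / (\<omega> * m))"
      unfolding B_def P_def by (simp add: field_simps)
    finally have fin: "\<bar>\<psi> pi\<bar> * \<bar>sin (\<omega> * pi)\<bar> \<le> \<bar>\<psi> pi\<bar> * (exp (K * pi) * Rb * pi * g pi / (\<omega> * m))" .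
    have "\<bar>sin (\<omega> * pi)\<bar> \<le> exp (K * pi) * Rb * pi * g pi / (\<omega> * m)"
      by (rule mult_left_le_imp_le[OF fin]) (use psipi in simp)
    also have "\<dots> \<le> exp (K * pi) * Rb * pi * sqrt M / (\<omega> * m)"
    proof -
      have Rb0: "Rb \<ge> 0" using Rb[of 0] by (smt (verit) abs_ge_zero atLeastAtMost_iff pi_ge_zero)
      have "exp (K * pi) * Rb * pi * g pi \<le> exp (K * pi) * Rb * pi * sqrt M"
        using gpi Rb0 by (intro mult_left_mono) auto
      then show ?thesis using \<omega> b(1) by (intro divide_right_mono) auto
    qed
    also have "\<dots> = C / sqrt ev" unfolding C_def \<omega>_def by (simp add: field_simps)
    finally show "\<bar>sin (sqrt ev * pi)\<bar> \<le> C / sqrt ev" unfolding \<omega>_def .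
  qed
qed

end

lemma sin_half_lb:
  fixes x :: real
  assumes "0 \<le> x" "x \<le> pi / 3"
  shows "x / 2 \<le> sin x"
proof -
  have "(\<lambda>y. y / 2 - sin y) x \<le> (\<lambda>y. y / 2 - sin y) 0"
  proof (rule decr_Icc[where f'="\<lambda>y. 1/2 - cos y" and f="\<lambda>y. y / 2 - sin y" and a=0 and b=x])
    show "0 \<le> x" using assms by simp
    fix y assume y: "y \<in> {0..x}"
    show "((\<lambda>y. y / 2 - sin y) has_real_derivative 1/2 - cos y) (at y within {0..x})"
      by (rule derivative_eq_intros refl | simp)+
    have "cos (pi/3) \<le> cos y" using y assms by (intro cos_monotone_0_pi_le) auto
    then show "1/2 - cos y \<le> 0" using cos_60 by simp
  qed
  then show ?thesis by simp
qed

lemma sin_lin_lb: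
  fixes x :: real
  assumes "0 \<le> x" "x \<le> pi / 2"
  shows "x / pi \<le> sin x"
proof (cases "x \<le> pi / 3")
  case True
  then have "x / 2 \<le> sin x" using sin_half_lb assms by simp
  moreover have "x / pi \<le> x / 2" using assms pi_gt3 by (intro divide_left_mono) auto
  ultimately show ?thesis by linarith
next
  case False
  have "sin (pi/3) \<le> sin x" using False assms by (intro sin_monotone_2pi_le) auto
  moreover have "sqrt 3 / 2 \<ge> 1/2" by simp
  moreover have "x / pi \<le> 1/2" using assms by (simp add: field_simps)
  ultimately show ?thesis using sin_60 by linarith
qed

lemma abs_sin_lb:
  fixes t :: real
  assumes "\<bar>t\<bar> \<le> 1/2"
  shows "\<bar>t\<bar> \<le> \<bar>sin (pi * t)\<bar>"
proof -
  have "\<bar>pi * t\<bar> / pi \<le> sin \<bar>pi * t\<bar>"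
    using assms by (intro sin_lin_lb) (auto simp: abs_mult)
  moreover have "\<bar>pi * t\<bar> / pi = \<bar>t\<bar>" by (simp add: abs_mult)
  moreover have "sin \<bar>pi * t\<bar> = \<bar>sin (pi * t)\<bar>"
  proof (cases "t \<ge> 0")
    case True
    have a1: "0 \<le> pi * t" using True by simp
    have "pi * t \<le> pi * 1" using assms True by (intro mult_left_mono) auto
    then have a2: "pi * t \<le> pi" by simp
    have "sin (pi * t) \<ge> 0" by (rule sin_ge_zero[OF a1 a2])
    then show ?thesis using True by simp
  next
    case False
    have a1: "0 \<le> - (pi * t)" using False by (simp add: mult_nonneg_nonpos)
    have "- (pi * t) = pi * (- t)" by simp
    also have "\<dots> \<le> pi * 1" using assms False by (intro mult_left_mono) auto
    finally have a2: "- (pi * t) \<le> pi" by simp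
    have "sin (- (pi * t)) \<ge> 0" by (rule sin_ge_zero[OF a1 a2])
    then show ?thesis using False by (simp add: abs_mult)
  qed
  ultimately show ?thesis by simp
qed

lemma abs_sin_shift: "\<bar>sin (x + real_of_int j * pi)\<bar> = \<bar>sin x\<bar>"
proof -
  have s: "sin (real_of_int j * pi) = 0" by (auto simp: sin_zero_iff_int2)
  then have c: "\<bar>cos (real_of_int j * pi)\<bar> = 1"
    using sin_cos_squared_add[of "real_of_int j * pi"] by (simp add: abs_square_eq_1)
  show ?thesis by (simp add: sin_add s abs_mult c)
qed

lemma near_int:
  fixes w :: real
  shows "\<exists>j::int. \<bar>w - j\<bar> \<le> 1/2 \<and> \<bar>w - j\<bar> \<le> \<bar>sin (pi * w)\<bar>"
proof -
  define j where "j = \<lfloor>w + 1/2\<rfloor>"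
  have h: "\<bar>w - j\<bar> \<le> 1/2" unfolding j_def by linarith
  have "pi * w = pi * (w - j) + real_of_int j * pi" by (simp add: algebra_simps)
  then have "\<bar>sin (pi * w)\<bar> = \<bar>sin (pi * (w - j))\<bar>" using abs_sin_shift by simp
  then show ?thesis using abs_sin_lb[OF h] h by auto
qed

lemma parity_gap:
  fixes p q m :: nat and j :: int
  assumes "even p" "odd q" "odd m" "p > 0"
  shows "\<bar>real_of_int j - real q / real p * real m\<bar> \<ge> 1 / real p"
proof -
  have "odd (int q * int m)" using assms by simp
  moreover have "even (j * int p)" using assms by simp
  ultimately have "j * int p - int q * int m \<noteq> 0" by (metis dvd_minus_iff odd_add dvd_0_right diff_add_cancel)
  then have "\<bar>j * int p - int q * int m\<bar> \<ge> 1" by linarith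
  then have "\<bar>real_of_int (j * int p - int q * int m)\<bar> \<ge> 1" by linarith
  then have "\<bar>real_of_int j * real p - real q * real m\<bar> \<ge> 1" by simp
  moreover have "real_of_int j * real p - real q * real m = real p * (real_of_int j - real q / real p * real m)"
    using assms by (simp add: field_simps)
  ultimately have "real p * \<bar>real_of_int j - real q / real p * real m\<bar> \<ge> 1" by (simp add: abs_mult)
  then show ?thesis using assms by (simp add: field_simps)
qed


lemma lam_strict:
  fixes lam :: "nat \<Rightarrow> real"
  assumes mono: "\<forall>n\<ge>1. lam n < lam (Suc n)" and a: "1 \<le> a" and ab: "a < b"
  shows "lam a < lam b"
  using ab
proof (induction b)
  case 0 then show ?case by simp
next
  case (Suc b)
  show ?case
  proof (cases "a = b")
    case True then show ?thesis using mono a by simp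
  next
    case False
    then have "a < b" using Suc.prems by simp
    then have "lam a < lam b" using Suc.IH by simp
    moreover have "lam b < lam (Suc b)" using mono a \<open>a < b\<close> by simp
    ultimately show ?thesis by simp
  qed
qed

lemma lam_le:
  fixes lam :: "nat \<Rightarrow> real"
  assumes mono: "\<forall>n\<ge>1. lam n < lam (Suc n)" and a: "1 \<le> a" and ab: "a \<le> b"
  shows "lam a \<le> lam b"
  using lam_strict[OF mono a, of b] ab by (cases "a = b") auto

context SL begin

lemma lam_finite:
  fixes lam :: "nat \<Rightarrow> real"
  assumes mono: "\<forall>n\<ge>1. lam n < lam (Suc n)"
    and eig: "{lam n | n. n \<ge> 1} = {ev. dirichlet_SL_eigenvalue u ev}"
  shows "finite {n. 1 \<le> n \<and> lam n \<le> B}"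
proof (rule ccontr)
  assume inf: "infinite {n. 1 \<le> n \<and> lam n \<le> B}"
  have bnd: "lam n \<le> B" if n: "1 \<le> n" for n
  proof -
    obtain k where "k \<ge> n" "k \<in> {n. 1 \<le> n \<and> lam n \<le> B}"
      using inf unfolding infinite_nat_iff_unbounded_le by blast
    then show ?thesis using lam_le[OF mono n, of k] by simp
  qed
  define e where "e k = lam (Suc k)" for k
  have inc: "incseq e" unfolding incseq_def e_def
    using lam_le[OF mono] by simp
  obtain L where L: "e \<longlonglongrightarrow> L" "\<forall>i. e i \<le> L"
    using incseq_convergent[OF inc, of B] bnd unfolding e_def by auto
  have ev: "dirichlet_SL_eigenvalue u (e k)" for k
  proof -
    have "e k \<in> {lam n | n. n \<ge> 1}" unfolding e_def by auto
    then show ?thesis by (simp only: eig mem_Collect_eq)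
  qed
  have "dirichlet_SL_eigenvalue u L" by (rule eig_limit[OF ev L(1)])
  then have "L \<in> {lam n | n. n \<ge> 1}" using eig by simp
  then obtain N where N: "N \<ge> 1" "L = lam N" by auto
  have "lam N < lam (Suc N)" using mono N by simp
  moreover have "lam (Suc N) \<le> L" using L(2)[rule_format, of N] unfolding e_def .
  ultimately show False using N by simp
qed

lemma m_bound:
  fixes p q :: nat
  assumes p: "p > 0" "even p" and q: "odd q"
  shows "\<exists>N. \<forall>ev m. dirichlet_SL_eigenvalue u ev \<longrightarrow> odd m \<longrightarrow>
            \<bar>ev - (real q / real p * real m)\<^sup>2\<bar> \<le> M0 \<longrightarrow> real m \<le> N"
proof -
  obtain C where C: "\<And>ev. dirichlet_SL_eigenvalue u ev \<Longrightarrow> ev > 0 \<Longrightarrow> \<bar>sin (sqrt ev * pi)\<bar> \<le> C / sqrt ev"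
    using sin_est by blast
  define C' where "C' = \<bar>C\<bar>"
  define W0 where "W0 = 2 * real p * C' + 1"
  define V where "V = W0 ^ 2"
  define KB where "KB = 2 * real p * \<bar>M0\<bar> + V + \<bar>M0\<bar> + 1"
  have pr: "real p \<ge> 1" using p by simp
  have qr: "real q \<ge> 1" using q by (cases q) auto
  have C'0: "C' \<ge> 0" unfolding C'_def by simp
  have W0: "W0 \<ge> 1" unfolding W0_def using C'0 pr by simp
  show ?thesis
  proof (intro exI[of _ "real p * KB"] allI impI)
    fix ev m assume eig: "dirichlet_SL_eigenvalue u ev" and m: "odd m"
      and M0: "\<bar>ev - (real q / real p * real m)\<^sup>2\<bar> \<le> M0"
    define k where "k = real q / real p * real m"
    have k0: "k \<ge> 0" unfolding k_def by simp
    have kb: "k \<le> KB"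
    proof (cases "ev > 0 \<and> sqrt ev \<ge> W0")
      case True
      define w where "w = sqrt ev"
      have w: "w \<ge> W0" "w > 0" "w ^ 2 = ev" using True W0 unfolding w_def by auto
      have s1: "\<bar>sin (pi * w)\<bar> \<le> C' / w"
      proof -
        have "\<bar>sin (pi * w)\<bar> \<le> C / w" using C[OF eig] True unfolding w_def by (simp add: mult.commute)
        also have "\<dots> \<le> C' / w" unfolding C'_def using w by (intro divide_right_mono) auto
        finally show ?thesis .
      qed
      have "C' / w \<le> C' / W0" using w W0 C'0 by (intro divide_left_mono) auto
      also have "\<dots> \<le> 1 / (2 * real p)"
      proof -
        have "C' * (2 * real p) \<le> W0" unfolding W0_def by simp
        moreover have "W0 > 0" "real p > 0" using W0 pr by auto
        ultimately show ?thesis by (simp add: field_simps)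
      qed
      finally have s2: "\<bar>sin (pi * w)\<bar> \<le> 1 / (2 * real p)" using s1 by linarith
      obtain j :: int where j: "\<bar>w - j\<bar> \<le> \<bar>sin (pi * w)\<bar>" using near_int by blast
      have gap: "\<bar>real_of_int j - k\<bar> \<ge> 1 / real p" unfolding k_def by (rule parity_gap[OF p(2) q m p(1)])
      have wk: "\<bar>w - k\<bar> \<ge> 1 / (2 * real p)"
      proof -
        have "1 / real p = 1 / (2 * real p) + 1 / (2 * real p)" by (simp add: field_simps)
        then show ?thesis using gap j s2 by linarith
      qed
      have "ev - k^2 = (w - k) * (w + k)" using w by (simp add: algebra_simps power2_eq_square)
      then have "\<bar>ev - k^2\<bar> = \<bar>w - k\<bar> * (w + k)" using w k0 by (simp add: abs_mult)
      also have "\<dots> \<ge> 1 / (2 * real p) * k"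
        using wk w k0 by (intro mult_mono) auto
      finally have "k / (2 * real p) \<le> M0" using M0 unfolding k_def by simp
      then have "k \<le> 2 * real p * M0" using pr by (simp add: field_simps)
      moreover have "2 * real p * M0 \<le> 2 * real p * \<bar>M0\<bar>" by (rule mult_left_mono) auto
      moreover have "V \<ge> 0" unfolding V_def by simp
      ultimately show ?thesis unfolding KB_def by linarith
    next
      case False
      have evV: "ev \<le> V"
      proof (cases "ev > 0")
        case True
        then have "sqrt ev < W0" using False by simp
        then have "(sqrt ev)^2 < W0^2" using True by (intro power_strict_mono) auto
        then show ?thesis unfolding V_def using True by simp
      next
        case False
        moreover have "W0 ^ 2 \<ge> 0" by simp
        ultimately show ?thesis unfolding V_def by linarith
      qed
      have "k^2 \<le> ev + \<bar>M0\<bar>" using M0 unfolding k_def by linarith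
      moreover have "k \<le> k^2 + 1" by (smt (verit) power2_eq_square mult_le_cancel_right1 zero_le_mult_iff)
      ultimately show ?thesis unfolding KB_def using evV pr by (smt (verit) mult_nonneg_nonneg abs_ge_zero of_nat_0_le_iff)
    qed
    have "real m = k * real p / real q" unfolding k_def using p qr by (simp add: field_simps)
    also have "\<dots> \<le> k * real p"
    proof -
      have X0: "0 \<le> k * real p" using k0 by simp
      have "k * real p / real q \<le> k * real p / 1" using X0 qr by (intro divide_left_mono) auto
      then show ?thesis by simp
    qed
    also have "\<dots> \<le> real p * KB" using kb pr by (simp add: mult.commute mult_left_mono)
    finally show "real m \<le> real p * KB" .
  qed
qed

end

theorem proposition2p1:
  fixes u :: "real \<Rightarrow> real" and p q :: nat and lam :: "nat \<Rightarrow> real"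
  assumes u_C2: "C2_on_0pi u"
    and u_pos: "\<forall>x\<in>{0..pi}. u x > 0"
    and pq_pos: "p > 0" "q > 0"
    and pq_coprime: "coprime p q"
    and lam_mono: "\<forall>n\<ge>1. lam n < lam (Suc n)"
    and lam_eig: "{lam n | n. n \<ge> 1} = {ev. dirichlet_SL_eigenvalue u ev}"
    and p_even: "even p"
  shows "\<forall>\<mu> \<in> {lam n - (real q / real p * real m)\<^sup>2 | m n. odd m \<and> n \<ge> 1}.
           \<not> \<mu> islimpt {lam n - (real q / real p * real m)\<^sup>2 | m n. odd m \<and> n \<ge> 1} \<and>
           finite {(m, n). odd m \<and> n \<ge> 1 \<and> lam n - (real q / real p * real m)\<^sup>2 = \<mu>}"
proof -
  obtain u' u'' where d1: "\<forall>x\<in>{0..pi}. (u has_real_derivative u' x) (at x within {0..pi})"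
    and d2: "\<forall>x\<in>{0..pi}. (u' has_real_derivative u'' x) (at x within {0..pi})"
    and c: "continuous_on {0..pi} u''"
    using u_C2 unfolding C2_on_0pi_def by blast
  interpret SL u u' u''
    by unfold_locales (use d1 d2 c u_pos in auto)
  have q: "odd q"
  proof
    assume "even q"
    then have "is_unit (2::nat)" using coprime_common_divisor[OF pq_coprime] p_even by blast
    then show False by simp
  qed
  define S where "S = {lam n - (real q / real p * real m)\<^sup>2 | m n. odd m \<and> n \<ge> 1}"
  have eigS: "dirichlet_SL_eigenvalue u (lam n)" if "n \<ge> 1" for n
  proof -
    have "lam n \<in> {lam n | n. n \<ge> 1}" using that by auto
    then show ?thesis by (simp only: lam_eig mem_Collect_eq)
  qed
  have pr: "real p \<ge> 1" using pq_pos by simp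
  have bound: "\<exists>F. finite F \<and> (\<forall>m n. odd m \<longrightarrow> n \<ge> 1 \<longrightarrow>
      \<bar>lam n - (real q / real p * real m)\<^sup>2\<bar> \<le> M0 \<longrightarrow> (m, n) \<in> F)" for M0
  proof -
    obtain N where N: "\<And>ev m. dirichlet_SL_eigenvalue u ev \<Longrightarrow> odd m \<Longrightarrow>
        \<bar>ev - (real q / real p * real m)\<^sup>2\<bar> \<le> M0 \<Longrightarrow> real m \<le> N"
      using m_bound[OF pq_pos(1) p_even q, of M0] by blast
    define Bn where "Bn = M0 + (real q * N)\<^sup>2"
    define F where "F = {m. m \<le> nat \<lceil>N\<rceil>} \<times> {n. 1 \<le> n \<and> lam n \<le> Bn}"
    have "finite F" unfolding F_def using lam_finite[OF lam_mono lam_eig] by simp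
    moreover have "(m, n) \<in> F" if m: "odd m" and n: "n \<ge> 1"
      and le: "\<bar>lam n - (real q / real p * real m)\<^sup>2\<bar> \<le> M0" for m n
    proof -
      have mN: "real m \<le> N" using N[OF eigS[OF n] m le] .
      then have "m \<le> nat \<lceil>N\<rceil>" by linarith
      moreover have "lam n \<le> Bn"
      proof -
        have k0: "0 \<le> real q / real p * real m" by simp
        have "real q / real p * real m = real q * real m / real p" by simp
        also have "\<dots> \<le> real q * real m / 1" by (rule divide_left_mono) (use pr in auto)
        also have "\<dots> = real q * real m" by simp
        also have "\<dots> \<le> real q * N" using mN by (intro mult_left_mono) auto
        finally have "(real q / real p * real m)\<^sup>2 \<le> (real q * N)\<^sup>2" using k0 by (intro power_mono) auto
        then show ?thesis unfolding Bn_def using le by linarith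
      qed
      ultimately show ?thesis unfolding F_def using n by simp
    qed
    ultimately show ?thesis by blast
  qed
  show ?thesis
  proof (fold S_def, intro ballI conjI)
    fix \<mu> assume "\<mu> \<in> S"
    obtain F where F: "finite F" "\<And>m n. odd m \<Longrightarrow> n \<ge> 1 \<Longrightarrow>
        \<bar>lam n - (real q / real p * real m)\<^sup>2\<bar> \<le> \<bar>\<mu>\<bar> + 1 \<Longrightarrow> (m, n) \<in> F"
      using bound[of "\<bar>\<mu>\<bar> + 1"] by blast
    show "finite {(m, n). odd m \<and> n \<ge> 1 \<and> lam n - (real q / real p * real m)\<^sup>2 = \<mu>}"
      by (rule finite_subset[OF _ F(1)]) (auto intro: F(2))
    define T where "T = S \<inter> {y. \<bar>y - \<mu>\<bar> < 1}"
    have "T \<subseteq> (\<lambda>(m, n). lam n - (real q / real p * real m)\<^sup>2) ` F"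
    proof
      fix y assume "y \<in> T"
      then obtain m n where y: "y = lam n - (real q / real p * real m)\<^sup>2" "odd m" "n \<ge> 1" "\<bar>y - \<mu>\<bar> < 1"
        unfolding T_def S_def by blast
      then have "(m, n) \<in> F" by (intro F(2)) auto
      then show "y \<in> (\<lambda>(m, n). lam n - (real q / real p * real m)\<^sup>2) ` F" using y(1) by force
    qed
    then have fT: "finite T" using F(1) finite_subset by blast
    show "\<not> \<mu> islimpt S"
    proof
      assume lp: "\<mu> islimpt S"
      have "\<mu> islimpt T" unfolding islimpt_approachable
      proof (intro allI impI)
        fix e :: real assume e: "e > 0"
        obtain x where x: "x \<in> S" "x \<noteq> \<mu>" "dist x \<mu> < min e 1"
          using lp[unfolded islimpt_approachable, rule_format, of "min e 1"] e by auto
        then have "x \<in> T" unfolding T_def by (auto simp: dist_real_def)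
        then show "\<exists>x'\<in>T. x' \<noteq> \<mu> \<and> dist x' \<mu> < e" using x by auto
      qed
      then show False using islimpt_finite[OF fT] by blast
    qed
  qed
qed


end
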